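(* Let $T$ be a tree on $n$ vertices, let $v$ be a vertex of $T$, and let $\mathrm{SFS}(T,v)=(F_1,\dots,F_n)$. Then $$X_T=\sum_{i=1}^n p_i F_i.$$
   Context: For a graph $G$, a proper coloring is a map $\kappa: V(G)\to\mathbb{N}=\{1,2,\dots\}$ with $\kappa(u)\neq\kappa(w)$ whenever $uw\in E(G)$. With commuting indeterminates $x_1,x_2,\dots$, the chromatic symmetric function is $X_G=\sum_\kappa \prod_{u\in V(G)} x_{\kappa(u)}$ over all proper colorings $\kappa$ of $G$, and for a vertex $v$ and $c\in\mathbb{N}$, $Z_G^v(c)$ is the same sum restricted to proper colorings with $\kappa(v)=c$. The power-sum symmetric functions are $p_i=\sum_{j\ge1}x_j^i$. For a tree $T$ on $n$ vertices and a vertex $v$, the symmetric function sequence $\mathrm{SFS}(T,v)=(F_1,\dots,F_n)$ is the unique $n$-tuple of symmetric functions in $x_1,x_2,\dots$ such that $Z_T^v(c)=\sum_{i=1}^n x_c^iF_i$ for every $c\in\mathbb{N}$ (such a tuple exists and is unique). *)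

theory Defs
  imports Complex_Main "HOL-Library.FuncSet"
begin

definition simple_graph :: "'a set \<Rightarrow> 'a set set \<Rightarrow> bool" where
  "simple_graph V E \<longleftrightarrow> finite V \<and> (\<forall>e\<in>E. \<exists>a b. a \<in> V \<and> b \<in> V \<and> a \<noteq> b \<and> e = {a, b})"

definition walk_adj :: "'a set set \<Rightarrow> 'a list \<Rightarrow> bool" where
  "walk_adj E xs \<longleftrightarrow> (\<forall>i. Suc i < length xs \<longrightarrow> {xs ! i, xs ! Suc i} \<in> E)"

definition graph_path :: "'a set \<Rightarrow> 'a set set \<Rightarrow> 'a list \<Rightarrow> bool" where
  "graph_path V E xs \<longleftrightarrow> xs \<noteq> [] \<and> distinct xs \<and> set xs \<subseteq> V \<and> walk_adj E xs"

definition graph_connected :: "'a set \<Rightarrow> 'a set set \<Rightarrow> bool" where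
  "graph_connected V E \<longleftrightarrow>
     (\<forall>u\<in>V. \<forall>w\<in>V. \<exists>xs. graph_path V E xs \<and> hd xs = u \<and> last xs = w)"

definition graph_cycle :: "'a set \<Rightarrow> 'a set set \<Rightarrow> 'a list \<Rightarrow> bool" where
  "graph_cycle V E xs \<longleftrightarrow> length xs \<ge> 3 \<and> graph_path V E xs \<and> {last xs, hd xs} \<in> E"

definition is_tree :: "'a set \<Rightarrow> 'a set set \<Rightarrow> bool" where
  "is_tree V E \<longleftrightarrow> simple_graph V E \<and> V \<noteq> {} \<and> graph_connected V E
                     \<and> \<not> (\<exists>xs. graph_cycle V E xs)"

text \<open>A monomial x^alpha is encoded by its exponent function alpha :: nat => nat
  (alpha k = exponent of x_k); a formal power series is its coefficient function.
  The variable x_0 does not exist: proper series have zero coefficient whenever alpha 0 \<noteq> 0.\<close>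

type_synonym mon = "nat \<Rightarrow> nat"
type_synonym 'r ser = "mon \<Rightarrow> 'r"

definition mon_support :: "mon \<Rightarrow> nat set" where
  "mon_support \<alpha> = {k. \<alpha> k \<noteq> 0}"

definition mon_degree :: "mon \<Rightarrow> nat" where
  "mon_degree \<alpha> = (\<Sum>k\<in>mon_support \<alpha>. \<alpha> k)"

definition ser_mult :: "'r::comm_semiring_1 ser \<Rightarrow> 'r ser \<Rightarrow> 'r ser" where
  "ser_mult f g = (\<lambda>\<alpha>. \<Sum>\<beta>\<in>{\<beta>. \<forall>k. \<beta> k \<le> \<alpha> k}. f \<beta> * g (\<lambda>k. \<alpha> k - \<beta> k))"

definition var_pow :: "nat \<Rightarrow> nat \<Rightarrow> 'r::comm_semiring_1 ser" where
  "var_pow c i = (\<lambda>\<alpha>. if \<alpha> = (\<lambda>k. if k = c then i else 0) then 1 else 0)"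

definition power_sum :: "nat \<Rightarrow> 'r::comm_semiring_1 ser" where
  "power_sum i = (\<lambda>\<alpha>. if \<exists>j\<ge>1. \<alpha> = (\<lambda>k. if k = j then i else 0) then 1 else 0)"

definition symmetric_function :: "'r::comm_semiring_1 ser \<Rightarrow> bool" where
  "symmetric_function f \<longleftrightarrow>
     (\<forall>\<alpha>. f \<alpha> \<noteq> 0 \<longrightarrow> finite (mon_support \<alpha>) \<and> \<alpha> 0 = 0)
   \<and> (\<exists>d. \<forall>\<alpha>. f \<alpha> \<noteq> 0 \<longrightarrow> mon_degree \<alpha> \<le> d)
   \<and> (\<forall>\<sigma> \<alpha>. bij \<sigma> \<and> \<sigma> 0 = 0 \<longrightarrow> f (\<alpha> \<circ> \<sigma>) = f \<alpha>)"

text \<open>Proper colorings V -> {1,2,...} (extensional, so that the sets are finite).\<close>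

definition proper_colorings :: "'a set \<Rightarrow> 'a set set \<Rightarrow> ('a \<Rightarrow> nat) set" where
  "proper_colorings V E =
     {\<kappa> \<in> V \<rightarrow>\<^sub>E {1..}. \<forall>u w. {u, w} \<in> E \<longrightarrow> \<kappa> u \<noteq> \<kappa> w}"

text \<open>Monomial of a coloring: prod over u of x_(kappa u), i.e. exponent of x_j is |kappa^-1(j)|.\<close>

definition coloring_mon :: "'a set \<Rightarrow> ('a \<Rightarrow> nat) \<Rightarrow> mon" where
  "coloring_mon V \<kappa> = (\<lambda>j. card {u \<in> V. \<kappa> u = j})"

definition chrom_sym :: "'a set \<Rightarrow> 'a set set \<Rightarrow> 'r::comm_semiring_1 ser" where
  "chrom_sym V E = (\<lambda>\<alpha>. of_nat (card {\<kappa> \<in> proper_colorings V E. coloring_mon V \<kappa> = \<alpha>}))"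

definition chrom_Z :: "'a set \<Rightarrow> 'a set set \<Rightarrow> 'a \<Rightarrow> nat \<Rightarrow> 'r::comm_semiring_1 ser" where
  "chrom_Z V E v c =
     (\<lambda>\<alpha>. of_nat (card {\<kappa> \<in> proper_colorings V E. \<kappa> v = c \<and> coloring_mon V \<kappa> = \<alpha>}))"

definition is_SFS :: "'a set \<Rightarrow> 'a set set \<Rightarrow> 'a \<Rightarrow> (nat \<Rightarrow> 'r::comm_semiring_1 ser) \<Rightarrow> bool" where
  "is_SFS V E v F \<longleftrightarrow>
     (\<forall>i\<in>{1..card V}. symmetric_function (F i))
   \<and> (\<forall>c\<ge>1. chrom_Z V E v c = (\<lambda>\<alpha>. \<Sum>i=1..card V. ser_mult (var_pow c i) (F i) \<alpha>))"

end

theory Submission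
  imports Defs
begin

lemma ps_split:
  fixes f :: "'r::comm_semiring_1 ser"
  assumes i: "i \<ge> 1" and S: "S = {c. c \<ge> 1 \<and> \<alpha> c \<noteq> 0}" and fin: "finite S"
  shows "ser_mult (power_sum i) f \<alpha> = (\<Sum>c\<in>S. ser_mult (var_pow c i) f \<alpha>)"
proof -
  let ?B = "{\<beta>. \<forall>k. \<beta> k \<le> \<alpha> k}"
  have pw: "power_sum i \<beta> = (\<Sum>c\<in>S. (var_pow c i \<beta> :: 'r))" if "\<beta> \<in> ?B" for \<beta>
  proof (cases "\<exists>j\<ge>1. \<beta> = (\<lambda>k. if k = j then i else 0)")
    case True
    then obtain j where j: "j \<ge> 1" "\<beta> = (\<lambda>k. if k = j then i else 0)" by blast
    have "\<beta> j \<le> \<alpha> j" using that by auto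
    hence jS: "j \<in> S" using j i S by auto
    have "(\<Sum>c\<in>S. (var_pow c i \<beta> :: 'r)) = (\<Sum>c\<in>S. if c = j then 1 else 0)"
    proof (rule sum.cong)
      fix c assume "c \<in> S"
      show "var_pow c i \<beta> = (if c = j then 1 else (0::'r))"
      proof (cases "c = j")
        case False
        have "(\<lambda>k. if k = j then i else 0) \<noteq> (\<lambda>k. if k = c then i else (0::nat))"
        proof
          assume "(\<lambda>k. if k = j then i else 0) = (\<lambda>k. if k = c then i else (0::nat))"
          hence "(if j = j then i else 0) = (if j = c then i else (0::nat))" by metis
          thus False using False i by auto
        qed
        thus ?thesis using False j by (simp add: var_pow_def)
      qed (simp add: var_pow_def j)
    qed simp
    also have "\<dots> = 1" using jS fin by simp
    finally show ?thesis using True by (simp add: power_sum_def)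
  next
    case False
    have "(\<Sum>c\<in>S. (var_pow c i \<beta> :: 'r)) = 0"
    proof (rule sum.neutral, rule ballI)
      fix c assume "c \<in> S"
      hence "c \<ge> 1" using S by auto
      thus "var_pow c i \<beta> = (0::'r)" using False by (auto simp: var_pow_def)
    qed
    thus ?thesis using False by (simp add: power_sum_def)
  qed
  have "ser_mult (power_sum i) f \<alpha> = (\<Sum>\<beta>\<in>?B. (\<Sum>c\<in>S. var_pow c i \<beta>) * f (\<lambda>k. \<alpha> k - \<beta> k))"
    unfolding ser_mult_def using pw by (intro sum.cong) auto
  also have "\<dots> = (\<Sum>\<beta>\<in>?B. \<Sum>c\<in>S. var_pow c i \<beta> * f (\<lambda>k. \<alpha> k - \<beta> k))"
    by (simp add: sum_distrib_right)
  also have "\<dots> = (\<Sum>c\<in>S. \<Sum>\<beta>\<in>?B. var_pow c i \<beta> * f (\<lambda>k. \<alpha> k - \<beta> k))"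
    by (rule sum.swap)
  also have "\<dots> = (\<Sum>c\<in>S. ser_mult (var_pow c i) f \<alpha>)"
    unfolding ser_mult_def by simp
  finally show ?thesis .
qed

lemma infinite_B:
  assumes "infinite (mon_support \<alpha>)"
  shows "infinite {\<beta>. \<forall>k. \<beta> k \<le> \<alpha> k}"
proof
  assume fin: "finite {\<beta>. \<forall>k. \<beta> k \<le> \<alpha> k}"
  let ?g = "\<lambda>j. (\<lambda>k. if k = j then \<alpha> j else 0)"
  have "inj_on ?g (mon_support \<alpha>)"
  proof (rule inj_onI)
    fix x y assume a: "x \<in> mon_support \<alpha>" "y \<in> mon_support \<alpha>" "?g x = ?g y"
    have "?g x x = ?g y x" using a(3) by (rule fun_cong)
    moreover have "\<alpha> x \<noteq> 0" using a(1) by (simp add: mon_support_def)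
    ultimately show "x = y" by (metis (mono_tags, lifting))
  qed
  moreover have "?g ` mon_support \<alpha> \<subseteq> {\<beta>. \<forall>k. \<beta> k \<le> \<alpha> k}" by auto
  ultimately have "finite (mon_support \<alpha>)"
    using fin finite_subset inj_on_finite by blast
  thus False using assms by simp
qed

theorem corollary3p6:
  fixes V :: "'a set" and E :: "'a set set" and v :: 'a and F :: "nat \<Rightarrow> rat ser"
  assumes "is_tree V E" and "v \<in> V" and "is_SFS V E v F"
  shows "chrom_sym V E = (\<lambda>\<alpha>. \<Sum>i=1..card V. ser_mult (power_sum i) (F i) \<alpha>)"
proof
  fix \<alpha> :: mon
  have finV: "finite V" using assms(1) by (simp add: is_tree_def simple_graph_def)
  let ?PC = "proper_colorings V E"
  let ?A = "{\<kappa> \<in> ?PC. coloring_mon V \<kappa> = \<alpha>}"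
  have pos: "\<alpha> (\<kappa> u) \<noteq> 0" if "\<kappa> \<in> ?A" "u \<in> V" for \<kappa> u
  proof -
    have "u \<in> {w \<in> V. \<kappa> w = \<kappa> u}" using that by auto
    hence "card {w \<in> V. \<kappa> w = \<kappa> u} \<noteq> 0" using finV by (auto simp: card_eq_0_iff)
    thus ?thesis using that by (auto simp: coloring_mon_def)
  qed
  show "chrom_sym V E \<alpha> = (\<Sum>i=1..card V. ser_mult (power_sum i) (F i) \<alpha>)"
  proof (cases "finite (mon_support \<alpha>)")
    case False
    have "?A = {}"
    proof (rule ccontr)
      assume "?A \<noteq> {}"
      then obtain \<kappa> where k: "\<kappa> \<in> ?A" by blast
      have "mon_support \<alpha> \<subseteq> \<kappa> ` V"
      proof
        fix j assume "j \<in> mon_support \<alpha>"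
        hence "card {u \<in> V. \<kappa> u = j} \<noteq> 0" using k by (auto simp: mon_support_def coloring_mon_def)
        then obtain u where "u \<in> V" "\<kappa> u = j"
          by (metis (mono_tags, lifting) card.empty empty_Collect_eq)
        thus "j \<in> \<kappa> ` V" by blast
      qed
      thus False using False finV finite_subset by blast
    qed
    hence "chrom_sym V E \<alpha> = (0::rat)" unfolding chrom_sym_def by (metis card.empty of_nat_0)
    moreover have "ser_mult (power_sum i) (F i) \<alpha> = 0" for i
      using infinite_B[OF False] by (simp add: ser_mult_def)
    ultimately show ?thesis by simp
  next
    case True
    define S where "S = {c. c \<ge> 1 \<and> \<alpha> c \<noteq> 0}"
    have finS: "finite S" using True by (rule finite_subset[rotated]) (auto simp: S_def mon_support_def)
    let ?Ac = "\<lambda>c. {\<kappa> \<in> ?PC. \<kappa> v = c \<and> coloring_mon V \<kappa> = \<alpha>}"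
    have AS: "?A \<subseteq> PiE V (\<lambda>_. S)"
    proof
      fix \<kappa> assume k: "\<kappa> \<in> ?A"
      hence "\<kappa> \<in> V \<rightarrow>\<^sub>E {1..}" by (simp add: proper_colorings_def)
      thus "\<kappa> \<in> PiE V (\<lambda>_. S)" using pos[OF k] by (auto simp: S_def PiE_def Pi_def)
    qed
    have finA: "finite ?A" using finite_subset[OF AS] finS finV by (simp add: finite_PiE)
    have Aeq: "?A = (\<Union>c\<in>S. ?Ac c)"
    proof
      show "?A \<subseteq> (\<Union>c\<in>S. ?Ac c)"
      proof
        fix \<kappa> assume k: "\<kappa> \<in> ?A"
        hence "\<kappa> v \<in> S" using AS assms(2) by (auto simp: PiE_def Pi_def)
        thus "\<kappa> \<in> (\<Union>c\<in>S. ?Ac c)" using k by blast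
      qed
    qed auto
    have "card ?A = (\<Sum>c\<in>S. card (?Ac c))"
      unfolding Aeq
      by (rule card_UN_disjoint[OF finS]) (auto intro: finite_subset[OF _ finA])
    hence "chrom_sym V E \<alpha> = (\<Sum>c\<in>S. (chrom_Z V E v c \<alpha> :: rat))"
      by (simp add: chrom_sym_def chrom_Z_def)
    also have "\<dots> = (\<Sum>c\<in>S. \<Sum>i=1..card V. ser_mult (var_pow c i) (F i) \<alpha>)"
    proof (rule sum.cong)
      fix c assume "c \<in> S"
      hence "c \<ge> 1" by (simp add: S_def)
      thus "chrom_Z V E v c \<alpha> = (\<Sum>i=1..card V. ser_mult (var_pow c i) (F i) \<alpha>)"
        using assms(3) unfolding is_SFS_def by metis
    qed simp
    also have "\<dots> = (\<Sum>i=1..card V. \<Sum>c\<in>S. ser_mult (var_pow c i) (F i) \<alpha>)"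
      by (rule sum.swap)
    also have "\<dots> = (\<Sum>i=1..card V. ser_mult (power_sum i) (F i) \<alpha>)"
      by (rule sum.cong) (auto simp: ps_split[OF _ S_def finS])
    finally show ?thesis .
  qed
qed

end
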